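(* Let $C>0$, and let $Q_1,\dots,Q_m,\widehat Q_1,\dots,\widehat Q_m$ be probability distributions on $\mathbb{R}^d$ all supported in $\{x:\|x\|_2\le C\}$. Let $\pi,\widehat\pi$ be probability vectors on $[m]$ and set $Q=\sum_i\pi_iQ_i$, $\widehat Q=\sum_i\widehat\pi_i\widehat Q_i$. Suppose $\mathrm{TV}(\widehat\pi,\pi)\le\alpha$ and $\mathcal W_2(\widehat Q_i,Q_i)\le\epsilon$ for all $i\in[m]$. Then $$\mathcal W_2(\widehat Q,Q)\le\epsilon+2C\sqrt\alpha.$$
   Context: $\mathrm{TV}(\widehat\pi,\pi)=\frac12\sum_i|\widehat\pi_i-\pi_i|$; $\mathcal W_2$ is the Wasserstein-2 distance with Euclidean cost. *)

theory Defs
  imports "HOL-Probability.Probability"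
begin

definition coupling :: "'a::euclidean_space measure \<Rightarrow> 'a measure \<Rightarrow> ('a \<times> 'a) measure \<Rightarrow> bool" where
  "coupling \<mu> \<nu> \<gamma> \<longleftrightarrow>
     sets \<gamma> = sets (borel \<Otimes>\<^sub>M borel) \<and>
     distr \<gamma> borel fst = \<mu> \<and> distr \<gamma> borel snd = \<nu>"

definition W2sq :: "'a::euclidean_space measure \<Rightarrow> 'a measure \<Rightarrow> ennreal" where
  "W2sq \<mu> \<nu> = (INF \<gamma> \<in> {\<gamma>. coupling \<mu> \<nu> \<gamma>}. \<integral>\<^sup>+ z. ennreal ((dist (fst z) (snd z))\<^sup>2) \<partial>\<gamma>)"

text \<open>Wasserstein-2 distance (real-valued; meaningful when W2sq is finite, e.g. for
  compactly supported measures as in the statement).\<close>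
definition W2 :: "'a::euclidean_space measure \<Rightarrow> 'a measure \<Rightarrow> real" where
  "W2 \<mu> \<nu> = sqrt (enn2real (W2sq \<mu> \<nu>))"

definition TV :: "nat \<Rightarrow> (nat \<Rightarrow> real) \<Rightarrow> (nat \<Rightarrow> real) \<Rightarrow> real" where
  "TV m p q = (1/2) * (\<Sum>i<m. \<bar>p i - q i\<bar>)"

definition prob_vector :: "nat \<Rightarrow> (nat \<Rightarrow> real) \<Rightarrow> bool" where
  "prob_vector m p \<longleftrightarrow> (\<forall>i<m. 0 \<le> p i) \<and> (\<Sum>i<m. p i) = 1"

definition bounded_prob :: "real \<Rightarrow> 'a::euclidean_space measure \<Rightarrow> bool" where
  "bounded_prob C \<mu> \<longleftrightarrow> prob_space \<mu> \<and> sets \<mu> = sets borel \<and> (AE x in \<mu>. norm x \<le> C)"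

definition is_mixture :: "nat \<Rightarrow> (nat \<Rightarrow> real) \<Rightarrow> (nat \<Rightarrow> 'a::euclidean_space measure) \<Rightarrow> 'a measure \<Rightarrow> bool" where
  "is_mixture m p Q M \<longleftrightarrow> sets M = sets borel \<and>
     (\<forall>A \<in> sets borel. emeasure M A = (\<Sum>i<m. ennreal (p i) * emeasure (Q i) A))"

end

theory Submission
  imports Defs
begin


definition mixm :: "nat \<Rightarrow> (nat \<Rightarrow> ennreal) \<Rightarrow> (nat \<Rightarrow> 'b measure) \<Rightarrow> 'b measure" where
  "mixm n w N = density (count_space {..<n}) w \<bind> N"

lemma mixm_meas:
  assumes "\<And>i. i < n \<Longrightarrow> prob_space (N i)" "\<And>i. i < n \<Longrightarrow> sets (N i) = sets K"
  shows "N \<in> measurable (density (count_space {..<n}) w) (subprob_algebra K)"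
proof -
  have "N \<in> measurable (count_space {..<n}) (subprob_algebra K)"
    using assms by (auto simp: space_subprob_algebra prob_space_imp_subprob_space)
  then show ?thesis by (simp add: measurable_cong_sets[OF sets_density refl])
qed

lemma mixm_sets:
  assumes "0 < n" "\<And>i. i < n \<Longrightarrow> prob_space (N i)" "\<And>i. i < n \<Longrightarrow> sets (N i) = sets K"
  shows "sets (mixm n w N) = sets K"
  unfolding mixm_def using assms by (intro sets_bind) auto

lemma mixm_nn_integral:
  assumes "0 < n" "\<And>i. i < n \<Longrightarrow> prob_space (N i)" "\<And>i. i < n \<Longrightarrow> sets (N i) = sets K"
    and f: "f \<in> borel_measurable K"
  shows "(\<integral>\<^sup>+x. f x \<partial>mixm n w N) = (\<Sum>i<n. w i * (\<integral>\<^sup>+x. f x \<partial>N i))"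
proof -
  have "(\<integral>\<^sup>+x. f x \<partial>mixm n w N) = (\<integral>\<^sup>+i. (\<integral>\<^sup>+x. f x \<partial>N i) \<partial>density (count_space {..<n}) w)"
    unfolding mixm_def by (rule nn_integral_bind[OF f mixm_meas[OF assms(2,3)]])
  also have "\<dots> = (\<integral>\<^sup>+i. w i * (\<integral>\<^sup>+x. f x \<partial>N i) \<partial>count_space {..<n})"
    by (subst nn_integral_density) auto
  also have "\<dots> = (\<Sum>i<n. w i * (\<integral>\<^sup>+x. f x \<partial>N i))"
    by (subst nn_integral_count_space_finite) auto
  finally show ?thesis .
qed

lemma mixm_emeasure:
  assumes "0 < n" "\<And>i. i < n \<Longrightarrow> prob_space (N i)" "\<And>i. i < n \<Longrightarrow> sets (N i) = sets K"
    and X: "X \<in> sets K"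
  shows "emeasure (mixm n w N) X = (\<Sum>i<n. w i * emeasure (N i) X)"
proof -
  have "emeasure (mixm n w N) X = (\<integral>\<^sup>+x. indicator X x \<partial>mixm n w N)"
    using X assms by (simp add: mixm_sets)
  also have "\<dots> = (\<Sum>i<n. w i * (\<integral>\<^sup>+x. indicator X x \<partial>N i))"
    using assms by (intro mixm_nn_integral) auto
  also have "\<dots> = (\<Sum>i<n. w i * emeasure (N i) X)"
    using X assms by (intro sum.cong refl) (simp add: sets_eq_imp_space_eq)
  finally show ?thesis .
qed



lemma prod_coupling:
  fixes \<mu> \<nu> :: "'a::euclidean_space measure"
  assumes "bounded_prob C \<mu>" "bounded_prob C \<nu>"
  shows "coupling \<mu> \<nu> (\<mu> \<Otimes>\<^sub>M \<nu>)" "prob_space (\<mu> \<Otimes>\<^sub>M \<nu>)"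
    "(\<integral>\<^sup>+ z. ennreal ((dist (fst z) (snd z))\<^sup>2) \<partial>(\<mu> \<Otimes>\<^sub>M \<nu>)) \<le> ennreal (4 * C\<^sup>2)"
proof -
  interpret M: prob_space \<mu> using assms by (simp add: bounded_prob_def)
  interpret N: prob_space \<nu> using assms by (simp add: bounded_prob_def)
  interpret P: pair_prob_space \<mu> \<nu> ..
  have sm: "sets \<mu> = sets borel" and sn: "sets \<nu> = sets borel" using assms by (auto simp: bounded_prob_def)
  have sp: "sets (\<mu> \<Otimes>\<^sub>M \<nu>) = sets (borel \<Otimes>\<^sub>M borel)"
    by (rule sets_pair_measure_cong[OF sm sn])
  have spc: "space \<mu> = UNIV" "space \<nu> = UNIV" using sets_eq_imp_space_eq[OF sm] sets_eq_imp_space_eq[OF sn] by auto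
  have d1: "distr (\<mu> \<Otimes>\<^sub>M \<nu>) borel fst = \<mu>"
  proof (rule measure_eqI)
    fix A assume A: "A \<in> sets (distr (\<mu> \<Otimes>\<^sub>M \<nu>) borel fst)"
    then have A': "A \<in> sets \<mu>" using sm by simp
    have "emeasure (distr (\<mu> \<Otimes>\<^sub>M \<nu>) borel fst) A = emeasure (\<mu> \<Otimes>\<^sub>M \<nu>) (A \<times> space \<nu>)"
      using A by (subst emeasure_distr) (auto simp: space_pair_measure spc measurable_cong_sets[OF sp refl] intro!: arg_cong2[where f=emeasure])
    also have "\<dots> = emeasure \<mu> A" using A' by (simp add: N.emeasure_pair_measure_Times N.emeasure_space_1)
    finally show "emeasure (distr (\<mu> \<Otimes>\<^sub>M \<nu>) borel fst) A = emeasure \<mu> A" .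
  qed (simp add: sm)
  have d2: "distr (\<mu> \<Otimes>\<^sub>M \<nu>) borel snd = \<nu>"
  proof (rule measure_eqI)
    fix A assume A: "A \<in> sets (distr (\<mu> \<Otimes>\<^sub>M \<nu>) borel snd)"
    then have A': "A \<in> sets \<nu>" using sn by simp
    have "emeasure (distr (\<mu> \<Otimes>\<^sub>M \<nu>) borel snd) A = emeasure (\<mu> \<Otimes>\<^sub>M \<nu>) (space \<mu> \<times> A)"
      using A by (subst emeasure_distr) (auto simp: space_pair_measure spc measurable_cong_sets[OF sp refl] intro!: arg_cong2[where f=emeasure])
    also have "\<dots> = emeasure \<nu> A" using A' by (simp add: N.emeasure_pair_measure_Times M.emeasure_space_1)
    finally show "emeasure (distr (\<mu> \<Otimes>\<^sub>M \<nu>) borel snd) A = emeasure \<nu> A" .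
  qed (simp add: sn)
  show "coupling \<mu> \<nu> (\<mu> \<Otimes>\<^sub>M \<nu>)" unfolding coupling_def using sp d1 d2 by simp
  show "prob_space (\<mu> \<Otimes>\<^sub>M \<nu>)" by (rule P.prob_space_axioms)
  have meas: "(\<lambda>z. ennreal ((dist (fst z) (snd z))\<^sup>2)) \<in> borel_measurable (\<mu> \<Otimes>\<^sub>M \<nu>)"
    using sp by (simp add: measurable_cong_sets[OF sp refl])
  have aeM: "AE x in \<mu>. norm x \<le> C" and aeN: "AE y in \<nu>. norm y \<le> C" using assms by (auto simp: bounded_prob_def)
  have "(\<integral>\<^sup>+ z. ennreal ((dist (fst z) (snd z))\<^sup>2) \<partial>(\<mu> \<Otimes>\<^sub>M \<nu>))
      = (\<integral>\<^sup>+ x. \<integral>\<^sup>+ y. ennreal ((dist x y)\<^sup>2) \<partial>\<nu> \<partial>\<mu>)"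
    using N.nn_integral_fst[OF meas] by simp
  also have "\<dots> \<le> (\<integral>\<^sup>+ x. \<integral>\<^sup>+ y. ennreal (4 * C\<^sup>2) \<partial>\<nu> \<partial>\<mu>)"
  proof (intro nn_integral_mono_AE)
    show "AE x in \<mu>. (\<integral>\<^sup>+ y. ennreal ((dist x y)\<^sup>2) \<partial>\<nu>) \<le> (\<integral>\<^sup>+ y. ennreal (4 * C\<^sup>2) \<partial>\<nu>)"
      using aeM
    proof eventually_elim
      case (elim x)
      show ?case
      proof (intro nn_integral_mono_AE)
        show "AE y in \<nu>. ennreal ((dist x y)\<^sup>2) \<le> ennreal (4 * C\<^sup>2)"
          using aeN
        proof eventually_elim
          case (elim y)
          have "dist x y \<le> norm x + norm y" by (simp add: dist_norm norm_triangle_ineq4)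
          also have "\<dots> \<le> 2 * C" using elim \<open>norm x \<le> C\<close> by simp
          finally have "(dist x y)\<^sup>2 \<le> (2*C)\<^sup>2" by (intro power_mono) auto
          then show ?case by (intro ennreal_leI) (simp add: power_mult_distrib)
        qed
      qed
    qed
  qed
  also have "\<dots> = ennreal (4 * C\<^sup>2)" by (simp add: M.emeasure_space_1 N.emeasure_space_1)
  finally show "(\<integral>\<^sup>+ z. ennreal ((dist (fst z) (snd z))\<^sup>2) \<partial>(\<mu> \<Otimes>\<^sub>M \<nu>)) \<le> ennreal (4 * C\<^sup>2)" .
qed


lemma mixm_space:
  assumes "0 < n" "\<And>i. i < n \<Longrightarrow> prob_space (N i)" "\<And>i. i < n \<Longrightarrow> sets (N i) = sets K"
  shows "space (mixm n w N) = space K"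
  using mixm_sets[OF assms] by (rule sets_eq_imp_space_eq)

lemma mixm_prob:
  assumes "0 < n" "\<And>i. i < n \<Longrightarrow> prob_space (N i)" "\<And>i. i < n \<Longrightarrow> sets (N i) = sets K"
    and "(\<Sum>i<n. w i) = 1"
  shows "prob_space (mixm n w N)"
proof (rule prob_spaceI)
  have sp: "space (mixm n w N) = space K" by (rule mixm_space[OF assms(1-3)])
  have "emeasure (mixm n w N) (space K) = (\<Sum>i<n. w i * emeasure (N i) (space K))"
    by (rule mixm_emeasure[OF assms(1-3)], (assumption | rule sets.top)+)
  also have "\<dots> = (\<Sum>i<n. w i)"
  proof (rule sum.cong[OF refl])
    fix i assume "i \<in> {..<n}"
    then have i: "i < n" by simp
    have "prob_space (N i)" using assms(2)[OF i] .
    moreover have "space (N i) = space K" using assms(3)[OF i] by (rule sets_eq_imp_space_eq)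
    ultimately
    show "w i * emeasure (N i) (space K) = w i" by (metis prob_space.emeasure_space_1 mult_1_right)
  qed
  finally show "emeasure (mixm n w N) (space (mixm n w N)) = 1" using assms(4) sp by simp
qed

lemma mixm_bounded:
  fixes N :: "nat \<Rightarrow> 'a::euclidean_space measure"
  assumes "0 < n" "\<And>i. i < n \<Longrightarrow> bounded_prob C (N i)"
    and "(\<Sum>i<n. w i) = 1"
  shows "bounded_prob C (mixm n w N)"
proof -
  have p: "\<And>i. i < n \<Longrightarrow> prob_space (N i)" and s: "\<And>i. i < n \<Longrightarrow> sets (N i) = sets borel"
    using assms(2) by (auto simp: bounded_prob_def)
  have sp: "space (mixm n w N) = UNIV" using mixm_space[OF assms(1) p s] by simp
  define B where "B = {x::'a. \<not> norm x \<le> C}"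
  have B: "B \<in> sets borel" unfolding B_def by measurable
  have "AE x in mixm n w N. norm x \<le> C"
  proof (subst AE_iff_measurable[OF _ refl])
    have eqB: "{x \<in> space (mixm n w N). \<not> norm x \<le> C} = B" unfolding B_def sp by simp
    show "{x \<in> space (mixm n w N). \<not> norm x \<le> C} \<in> sets (mixm n w N)"
      unfolding eqB using B mixm_sets[OF assms(1) p s] by simp
    have "emeasure (mixm n w N) B = (\<Sum>i<n. w i * emeasure (N i) B)"
      by (rule mixm_emeasure[OF assms(1) p s], (assumption | rule B)+)
    also have "\<dots> = 0"
    proof (rule sum.neutral, rule ballI)
      fix i assume i: "i \<in> {..<n}"
      have ae: "AE x in N i. norm x \<le> C" using assms(2) i by (auto simp: bounded_prob_def)
      have spi: "space (N i) = UNIV" using sets_eq_imp_space_eq[OF s[of i]] i by simp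
      have eqBi: "{x \<in> space (N i). \<not> norm x \<le> C} = B" unfolding B_def spi by simp
      have Bi: "B \<in> sets (N i)" using B s[of i] i by simp
      have "emeasure (N i) B = 0"
        using ae unfolding AE_iff_measurable[OF Bi eqBi] .
      then show "w i * emeasure (N i) B = 0" by simp
    qed
    finally show "emeasure (mixm n w N) {x \<in> space (mixm n w N). \<not> norm x \<le> C} = 0"
      unfolding eqB .
  qed
  then show ?thesis unfolding bounded_prob_def
    using mixm_prob[OF assms(1) p s assms(3)] mixm_sets[OF assms(1) p s] by simp
qed



lemma coupling_marg:
  fixes \<mu> \<nu> :: "'a::euclidean_space measure"
  assumes "coupling \<mu> \<nu> \<gamma>" "A \<in> sets borel"
  shows "emeasure \<gamma> (A \<times> UNIV) = emeasure \<mu> A" "emeasure \<gamma> (UNIV \<times> A) = emeasure \<nu> A"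
    "space \<gamma> = UNIV"
proof -
  have s: "sets \<gamma> = sets (borel \<Otimes>\<^sub>M borel)" and d1: "distr \<gamma> borel fst = \<mu>" and d2: "distr \<gamma> borel snd = \<nu>"
    using assms(1) by (auto simp: coupling_def)
  have sp: "space \<gamma> = UNIV" using sets_eq_imp_space_eq[OF s] by (simp add: space_pair_measure)
  then show "space \<gamma> = UNIV" .
  have m1: "fst \<in> measurable \<gamma> borel" unfolding measurable_cong_sets[OF s refl] by (rule measurable_fst)
  have m2: "snd \<in> measurable \<gamma> borel" unfolding measurable_cong_sets[OF s refl] by (rule measurable_snd)
  have "emeasure \<mu> A = emeasure \<gamma> (fst -` A \<inter> space \<gamma>)"
    unfolding d1[symmetric] by (rule emeasure_distr[OF m1 assms(2)])
  also have "fst -` A \<inter> space \<gamma> = A \<times> UNIV" using sp by auto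
  finally show "emeasure \<gamma> (A \<times> UNIV) = emeasure \<mu> A" by simp
  have "emeasure \<nu> A = emeasure \<gamma> (snd -` A \<inter> space \<gamma>)"
    unfolding d2[symmetric] by (rule emeasure_distr[OF m2 assms(2)])
  also have "snd -` A \<inter> space \<gamma> = UNIV \<times> A" using sp by auto
  finally show "emeasure \<gamma> (UNIV \<times> A) = emeasure \<nu> A" by simp
qed

lemma coupling_prob:
  fixes \<mu> \<nu> :: "'a::euclidean_space measure"
  assumes "coupling \<mu> \<nu> \<gamma>" "prob_space \<mu>"
  shows "prob_space \<gamma>"
proof (rule prob_spaceI)
  have d1: "distr \<gamma> borel fst = \<mu>" using assms(1) by (auto simp: coupling_def)
  have "space \<mu> = UNIV" unfolding d1[symmetric] by simp
  then have "emeasure \<mu> UNIV = 1" using prob_space.emeasure_space_1[OF assms(2)] by simp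
  then show "emeasure \<gamma> (space \<gamma>) = 1"
    using coupling_marg(1,3)[OF assms(1), of UNIV] by simp
qed

lemma cost_meas:
  "(\<lambda>z::'a::euclidean_space \<times> 'a. ennreal ((dist (fst z) (snd z))\<^sup>2)) \<in> borel_measurable (borel \<Otimes>\<^sub>M borel)"
  by simp

lemma times_sets: "A \<in> sets (borel::'a::euclidean_space measure) \<Longrightarrow> A \<times> (UNIV::'a set) \<in> sets (borel \<Otimes>\<^sub>M borel)"
  "A \<in> sets (borel::'a::euclidean_space measure) \<Longrightarrow> (UNIV::'a set) \<times> A \<in> sets (borel \<Otimes>\<^sub>M borel)"
  by (auto intro!: pair_measureI)



lemma weights:
  assumes "prob_vector m ph" "prob_vector m p"
  defines "\<beta> \<equiv> \<lambda>i. min (ph i) (p i)"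
  defines "T \<equiv> (\<Sum>i<m. ph i - \<beta> i)"
  shows "T = (\<Sum>i<m. p i - \<beta> i)" "T = TV m ph p" "(\<Sum>i<m. \<beta> i) + T = 1" "0 \<le> T"
    "\<And>i. i < m \<Longrightarrow> 0 \<le> ph i - \<beta> i" "\<And>i. i < m \<Longrightarrow> 0 \<le> p i - \<beta> i" "\<And>i. i < m \<Longrightarrow> 0 \<le> \<beta> i"
    "0 < m"
proof -
  have s1: "(\<Sum>i<m. ph i) = 1" and s2: "(\<Sum>i<m. p i) = 1" using assms(1,2) by (auto simp: prob_vector_def)
  have n1: "\<And>i. i<m \<Longrightarrow> 0 \<le> ph i" and n2: "\<And>i. i<m \<Longrightarrow> 0 \<le> p i" using assms(1,2) by (auto simp: prob_vector_def)
  show "0 < m" using s1 by (cases m) auto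
  show "\<And>i. i < m \<Longrightarrow> 0 \<le> ph i - \<beta> i" "\<And>i. i < m \<Longrightarrow> 0 \<le> p i - \<beta> i" "\<And>i. i < m \<Longrightarrow> 0 \<le> \<beta> i"
    using n1 n2 by (auto simp: \<beta>_def)
  have eT: "T = 1 - (\<Sum>i<m. \<beta> i)" unfolding T_def sum_subtractf s1 ..
  then show "(\<Sum>i<m. \<beta> i) + T = 1" by simp
  show "T = (\<Sum>i<m. p i - \<beta> i)" unfolding eT sum_subtractf s2 ..
  then have "2 * T = (\<Sum>i<m. ph i - \<beta> i) + (\<Sum>i<m. p i - \<beta> i)" unfolding T_def by simp
  also have "\<dots> = (\<Sum>i<m. \<bar>ph i - p i\<bar>)" unfolding sum.distrib[symmetric]
    by (intro sum.cong refl) (auto simp: \<beta>_def)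
  finally show "T = TV m ph p" unfolding TV_def by simp
  show "0 \<le> T" unfolding T_def by (intro sum_nonneg) (auto simp: \<beta>_def)
qed



lemma leftover:
  fixes Qh Q :: "nat \<Rightarrow> 'a::euclidean_space measure"
  assumes m: "0 < m" and bQh: "\<And>i. i < m \<Longrightarrow> bounded_prob C (Qh i)" and bQ: "\<And>i. i < m \<Longrightarrow> bounded_prob C (Q i)"
    and a: "\<And>i. i < m \<Longrightarrow> 0 \<le> a i" and b: "\<And>i. i < m \<Longrightarrow> 0 \<le> b i"
    and sa: "(\<Sum>i<m. a i) = T" and sb: "(\<Sum>i<m. b i) = T"
  shows "\<exists>P. prob_space P \<and> sets P = sets (borel \<Otimes>\<^sub>M borel) \<and>
     (\<integral>\<^sup>+ z. ennreal ((dist (fst z) (snd z))\<^sup>2) \<partial>P) \<le> ennreal (4 * C\<^sup>2) \<and>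
     (\<forall>A\<in>sets borel. ennreal T * emeasure P (A \<times> UNIV) = (\<Sum>i<m. ennreal (a i) * emeasure (Qh i) A)) \<and>
     (\<forall>A\<in>sets borel. ennreal T * emeasure P (UNIV \<times> A) = (\<Sum>i<m. ennreal (b i) * emeasure (Q i) A))"
proof (cases "T = 0")
  case True
  have a0: "\<And>i. i<m \<Longrightarrow> a i = 0" using sa True a sum_nonneg_eq_0_iff[of "{..<m}" a] by auto
  have b0: "\<And>i. i<m \<Longrightarrow> b i = 0" using sb True b sum_nonneg_eq_0_iff[of "{..<m}" b] by auto
  let ?P = "Qh 0 \<Otimes>\<^sub>M Q 0"
  have c: "coupling (Qh 0) (Q 0) ?P" "prob_space ?P"
     "(\<integral>\<^sup>+ z. ennreal ((dist (fst z) (snd z))\<^sup>2) \<partial>?P) \<le> ennreal (4 * C\<^sup>2)"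
    using prod_coupling[OF bQh[OF m] bQ[OF m]] by auto
  show ?thesis
    by (rule exI[of _ ?P]) (use c a0 b0 True in \<open>auto simp: coupling_def\<close>)
next
  case False
  then have Tp: "T > 0" using sa sum_nonneg[of "{..<m}" a] a by force
  define Rh where "Rh = mixm m (\<lambda>i. ennreal (a i / T)) Qh"
  define R where "R = mixm m (\<lambda>i. ennreal (b i / T)) Q"
  have w1: "(\<Sum>i<m. ennreal (a i / T)) = 1"
  proof -
    have "(\<Sum>i<m. ennreal (a i / T)) = ennreal (\<Sum>i<m. a i / T)"
      using a Tp by (intro sum_ennreal) auto
    also have "(\<Sum>i<m. a i / T) = 1" unfolding sum_divide_distrib[symmetric] sa using Tp by simp
    finally show ?thesis by simp
  qed
  have w2: "(\<Sum>i<m. ennreal (b i / T)) = 1"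
  proof -
    have "(\<Sum>i<m. ennreal (b i / T)) = ennreal (\<Sum>i<m. b i / T)"
      using b Tp by (intro sum_ennreal) auto
    also have "(\<Sum>i<m. b i / T) = 1" unfolding sum_divide_distrib[symmetric] sb using Tp by simp
    finally show ?thesis by simp
  qed
  have bRh: "bounded_prob C Rh" unfolding Rh_def by (rule mixm_bounded[OF m bQh w1])
  have bR: "bounded_prob C R" unfolding R_def by (rule mixm_bounded[OF m bQ w2])
  let ?P = "Rh \<Otimes>\<^sub>M R"
  have c: "coupling Rh R ?P" "prob_space ?P"
     "(\<integral>\<^sup>+ z. ennreal ((dist (fst z) (snd z))\<^sup>2) \<partial>?P) \<le> ennreal (4 * C\<^sup>2)"
    using prod_coupling[OF bRh bR] by auto
  have pQh: "\<And>i. i < m \<Longrightarrow> prob_space (Qh i)" and sQh: "\<And>i. i < m \<Longrightarrow> sets (Qh i) = sets borel"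
    using bQh by (auto simp: bounded_prob_def)
  have pQ: "\<And>i. i < m \<Longrightarrow> prob_space (Q i)" and sQ: "\<And>i. i < m \<Longrightarrow> sets (Q i) = sets borel"
    using bQ by (auto simp: bounded_prob_def)
  have f1: "ennreal T * emeasure ?P (A \<times> UNIV) = (\<Sum>i<m. ennreal (a i) * emeasure (Qh i) A)"
    if A: "A \<in> sets borel" for A
  proof -
    have "emeasure ?P (A \<times> UNIV) = emeasure Rh A" by (rule coupling_marg(1)[OF c(1) A])
    also have "\<dots> = (\<Sum>i<m. ennreal (a i / T) * emeasure (Qh i) A)"
      unfolding Rh_def by (rule mixm_emeasure[OF m pQh sQh], (assumption | rule A)+)
    finally have "ennreal T * emeasure ?P (A \<times> UNIV) = (\<Sum>i<m. ennreal T * (ennreal (a i / T) * emeasure (Qh i) A))"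
      by (simp add: sum_distrib_left)
    also have "\<dots> = (\<Sum>i<m. ennreal (a i) * emeasure (Qh i) A)"
    proof (rule sum.cong[OF refl])
      fix i assume "i \<in> {..<m}"
      then have "0 \<le> a i" using a by simp
      then have "ennreal T * ennreal (a i / T) = ennreal (a i)" using Tp by (simp add: ennreal_mult[symmetric])
      then show "ennreal T * (ennreal (a i / T) * emeasure (Qh i) A) = ennreal (a i) * emeasure (Qh i) A"
        by (simp add: mult.assoc[symmetric])
    qed
    finally show ?thesis .
  qed
  have f2: "ennreal T * emeasure ?P (UNIV \<times> A) = (\<Sum>i<m. ennreal (b i) * emeasure (Q i) A)"
    if A: "A \<in> sets borel" for A
  proof -
    have "emeasure ?P (UNIV \<times> A) = emeasure R A" by (rule coupling_marg(2)[OF c(1) A])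
    also have "\<dots> = (\<Sum>i<m. ennreal (b i / T) * emeasure (Q i) A)"
      unfolding R_def by (rule mixm_emeasure[OF m pQ sQ], (assumption | rule A)+)
    finally have "ennreal T * emeasure ?P (UNIV \<times> A) = (\<Sum>i<m. ennreal T * (ennreal (b i / T) * emeasure (Q i) A))"
      by (simp add: sum_distrib_left)
    also have "\<dots> = (\<Sum>i<m. ennreal (b i) * emeasure (Q i) A)"
    proof (rule sum.cong[OF refl])
      fix i assume "i \<in> {..<m}"
      then have "0 \<le> b i" using b by simp
      then have "ennreal T * ennreal (b i / T) = ennreal (b i)" using Tp by (simp add: ennreal_mult[symmetric])
      then show "ennreal T * (ennreal (b i / T) * emeasure (Q i) A) = ennreal (b i) * emeasure (Q i) A"
        by (simp add: mult.assoc[symmetric])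
    qed
    finally show ?thesis .
  qed
  show ?thesis
    by (rule exI[of _ ?P]) (use c f1 f2 in \<open>auto simp: coupling_def\<close>)
qed



lemma step:
  fixes C \<alpha> e :: real and m :: nat
    and Q Qh :: "nat \<Rightarrow> 'a::euclidean_space measure"
    and \<pi> \<pi>h :: "nat \<Rightarrow> real"
    and QM QhM :: "'a measure" and \<gamma> :: "nat \<Rightarrow> ('a \<times> 'a) measure"
  assumes bQ: "\<And>i. i < m \<Longrightarrow> bounded_prob C (Q i)"
    and bQh: "\<And>i. i < m \<Longrightarrow> bounded_prob C (Qh i)"
    and pv: "prob_vector m \<pi>" and pvh: "prob_vector m \<pi>h"
    and mix: "is_mixture m \<pi> Q QM" and mixh: "is_mixture m \<pi>h Qh QhM"
    and tv: "TV m \<pi>h \<pi> \<le> \<alpha>"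
    and cg: "\<And>i. i < m \<Longrightarrow> coupling (Qh i) (Q i) (\<gamma> i)"
    and cost: "\<And>i. i < m \<Longrightarrow> (\<integral>\<^sup>+ z. ennreal ((dist (fst z) (snd z))\<^sup>2) \<partial>\<gamma> i) \<le> ennreal e"
    and e: "0 \<le> e"
  shows "W2sq QhM QM \<le> ennreal (e + 4 * C\<^sup>2 * \<alpha>)"
proof -
  define \<beta> where "\<beta> = (\<lambda>i. min (\<pi>h i) (\<pi> i))"
  define T where "T = (\<Sum>i<m. \<pi>h i - \<beta> i)"
  have W: "T = (\<Sum>i<m. \<pi> i - \<beta> i)" "T = TV m \<pi>h \<pi>" "(\<Sum>i<m. \<beta> i) + T = 1" "0 \<le> T"
    "\<And>i. i < m \<Longrightarrow> 0 \<le> \<pi>h i - \<beta> i" "\<And>i. i < m \<Longrightarrow> 0 \<le> \<pi> i - \<beta> i" "\<And>i. i < m \<Longrightarrow> 0 \<le> \<beta> i"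
    "0 < m"
    using weights[OF pvh pv] unfolding \<beta>_def T_def by auto
  have m: "0 < m" by (rule W(8))
  obtain P where P: "prob_space P" "sets P = sets (borel \<Otimes>\<^sub>M borel)"
     "(\<integral>\<^sup>+ z. ennreal ((dist (fst z) (snd z))\<^sup>2) \<partial>P) \<le> ennreal (4 * C\<^sup>2)"
     "\<And>A. A\<in>sets borel \<Longrightarrow> ennreal T * emeasure P (A \<times> UNIV) = (\<Sum>i<m. ennreal (\<pi>h i - \<beta> i) * emeasure (Qh i) A)"
     "\<And>A. A\<in>sets borel \<Longrightarrow> ennreal T * emeasure P (UNIV \<times> A) = (\<Sum>i<m. ennreal (\<pi> i - \<beta> i) * emeasure (Q i) A)"
  proof -
    have "\<exists>P. prob_space P \<and> sets P = sets (borel \<Otimes>\<^sub>M borel) \<and>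
     (\<integral>\<^sup>+ z. ennreal ((dist (fst z) (snd z))\<^sup>2) \<partial>P) \<le> ennreal (4 * C\<^sup>2) \<and>
     (\<forall>A\<in>sets borel. ennreal T * emeasure P (A \<times> UNIV) = (\<Sum>i<m. ennreal (\<pi>h i - \<beta> i) * emeasure (Qh i) A)) \<and>
     (\<forall>A\<in>sets borel. ennreal T * emeasure P (UNIV \<times> A) = (\<Sum>i<m. ennreal (\<pi> i - \<beta> i) * emeasure (Q i) A))"
      by (rule leftover) (use m bQh bQ W(1,5,6) T_def in simp_all)
    then show ?thesis using that by blast
  qed
  define w where "w = (\<lambda>i. ennreal (if i < m then \<beta> i else T))"
  define N where "N = (\<lambda>i. if i < m then \<gamma> i else P)"
  define \<Gamma> where "\<Gamma> = mixm (Suc m) w N"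
  have pN: "prob_space (N i)" if "i < Suc m" for i
  proof (cases "i < m")
    case True
    then show ?thesis unfolding N_def using coupling_prob[OF cg[OF True]] bQh[OF True]
      by (simp add: bounded_prob_def)
  qed (simp add: N_def P)
  have sN: "sets (N i) = sets (borel \<Otimes>\<^sub>M borel)" if "i < Suc m" for i
  proof (cases "i < m")
    case True
    then show ?thesis unfolding N_def using cg[OF True] by (simp add: coupling_def)
  qed (simp add: N_def P)
  have m': "0 < Suc m" by simp
  have sG: "sets \<Gamma> = sets (borel \<Otimes>\<^sub>M borel)" unfolding \<Gamma>_def by (rule mixm_sets[OF m' pN sN])
  have spG: "space \<Gamma> = UNIV" using sets_eq_imp_space_eq[OF sG] by (simp add: space_pair_measure)
  have m1: "fst \<in> measurable \<Gamma> borel" unfolding measurable_cong_sets[OF sG refl] by (rule measurable_fst)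
  have m2: "snd \<in> measurable \<Gamma> borel" unfolding measurable_cong_sets[OF sG refl] by (rule measurable_snd)
  have sQM: "sets QM = sets borel" and sQhM: "sets QhM = sets borel"
    using mix mixh by (auto simp: is_mixture_def)
  have d1: "distr \<Gamma> borel fst = QhM"
  proof (rule measure_eqI)
    show "sets (distr \<Gamma> borel fst) = sets QhM" using sQhM by simp
    fix A assume "A \<in> sets (distr \<Gamma> borel fst)"
    then have A: "A \<in> sets borel" by simp
    have "emeasure (distr \<Gamma> borel fst) A = emeasure \<Gamma> (fst -` A \<inter> space \<Gamma>)"
      by (rule emeasure_distr[OF m1 A])
    also have "fst -` A \<inter> space \<Gamma> = A \<times> UNIV" using spG by auto
    also have "emeasure \<Gamma> (A \<times> UNIV) = (\<Sum>i<Suc m. w i * emeasure (N i) (A \<times> UNIV))"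
      unfolding \<Gamma>_def by (rule mixm_emeasure[OF m' pN sN], (assumption | rule times_sets A)+)
    also have "\<dots> = (\<Sum>i<m. ennreal (\<beta> i) * emeasure (Qh i) A) + ennreal T * emeasure P (A \<times> UNIV)"
      unfolding sum.lessThan_Suc
      by (intro arg_cong2[where f="(+)"] sum.cong refl) (auto simp: w_def N_def coupling_marg(1)[OF cg A])
    also have "\<dots> = (\<Sum>i<m. ennreal (\<beta> i) * emeasure (Qh i) A + ennreal (\<pi>h i - \<beta> i) * emeasure (Qh i) A)"
      unfolding P(4)[OF A] sum.distrib ..
    also have "\<dots> = (\<Sum>i<m. ennreal (\<pi>h i) * emeasure (Qh i) A)"
    proof (rule sum.cong[OF refl])
      fix i assume "i \<in> {..<m}"
      then have "0 \<le> \<beta> i" "0 \<le> \<pi>h i - \<beta> i" using W by auto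
      then have "ennreal (\<beta> i) + ennreal (\<pi>h i - \<beta> i) = ennreal (\<pi>h i)" by (simp add: ennreal_plus[symmetric])
      then show "ennreal (\<beta> i) * emeasure (Qh i) A + ennreal (\<pi>h i - \<beta> i) * emeasure (Qh i) A = ennreal (\<pi>h i) * emeasure (Qh i) A"
        by (simp add: distrib_right[symmetric])
    qed
    also have "\<dots> = emeasure QhM A" using mixh A by (simp add: is_mixture_def)
    finally show "emeasure (distr \<Gamma> borel fst) A = emeasure QhM A" .
  qed
  have d2: "distr \<Gamma> borel snd = QM"
  proof (rule measure_eqI)
    show "sets (distr \<Gamma> borel snd) = sets QM" using sQM by simp
    fix A assume "A \<in> sets (distr \<Gamma> borel snd)"
    then have A: "A \<in> sets borel" by simp
    have "emeasure (distr \<Gamma> borel snd) A = emeasure \<Gamma> (snd -` A \<inter> space \<Gamma>)"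
      by (rule emeasure_distr[OF m2 A])
    also have "snd -` A \<inter> space \<Gamma> = UNIV \<times> A" using spG by auto
    also have "emeasure \<Gamma> (UNIV \<times> A) = (\<Sum>i<Suc m. w i * emeasure (N i) (UNIV \<times> A))"
      unfolding \<Gamma>_def by (rule mixm_emeasure[OF m' pN sN], (assumption | rule times_sets A)+)
    also have "\<dots> = (\<Sum>i<m. ennreal (\<beta> i) * emeasure (Q i) A) + ennreal T * emeasure P (UNIV \<times> A)"
      unfolding sum.lessThan_Suc
      by (intro arg_cong2[where f="(+)"] sum.cong refl) (auto simp: w_def N_def coupling_marg(2)[OF cg A])
    also have "\<dots> = (\<Sum>i<m. ennreal (\<beta> i) * emeasure (Q i) A + ennreal (\<pi> i - \<beta> i) * emeasure (Q i) A)"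
      unfolding P(5)[OF A] sum.distrib ..
    also have "\<dots> = (\<Sum>i<m. ennreal (\<pi> i) * emeasure (Q i) A)"
    proof (rule sum.cong[OF refl])
      fix i assume "i \<in> {..<m}"
      then have "0 \<le> \<beta> i" "0 \<le> \<pi> i - \<beta> i" using W by auto
      then have "ennreal (\<beta> i) + ennreal (\<pi> i - \<beta> i) = ennreal (\<pi> i)" by (simp add: ennreal_plus[symmetric])
      then show "ennreal (\<beta> i) * emeasure (Q i) A + ennreal (\<pi> i - \<beta> i) * emeasure (Q i) A = ennreal (\<pi> i) * emeasure (Q i) A"
        by (simp add: distrib_right[symmetric])
    qed
    also have "\<dots> = emeasure QM A" using mix A by (simp add: is_mixture_def)
    finally show "emeasure (distr \<Gamma> borel snd) A = emeasure QM A" .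
  qed
  have cp: "coupling QhM QM \<Gamma>" unfolding coupling_def using sG d1 d2 by simp
  have "W2sq QhM QM \<le> (\<integral>\<^sup>+ z. ennreal ((dist (fst z) (snd z))\<^sup>2) \<partial>\<Gamma>)"
    unfolding W2sq_def by (rule INF_lower) (simp add: cp)
  also have "\<dots> = (\<Sum>i<Suc m. w i * (\<integral>\<^sup>+ z. ennreal ((dist (fst z) (snd z))\<^sup>2) \<partial>N i))"
    unfolding \<Gamma>_def by (rule mixm_nn_integral[OF m' pN sN cost_meas], assumption+)
  also have "\<dots> = (\<Sum>i<m. ennreal (\<beta> i) * (\<integral>\<^sup>+ z. ennreal ((dist (fst z) (snd z))\<^sup>2) \<partial>\<gamma> i))
      + ennreal T * (\<integral>\<^sup>+ z. ennreal ((dist (fst z) (snd z))\<^sup>2) \<partial>P)"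
    unfolding sum.lessThan_Suc
    by (intro arg_cong2[where f="(+)"] sum.cong refl) (auto simp: w_def N_def)
  also have "\<dots> \<le> (\<Sum>i<m. ennreal (\<beta> i) * ennreal e) + ennreal T * ennreal (4 * C\<^sup>2)"
    by (intro add_mono sum_mono mult_left_mono P(3) cost) auto
  also have "\<dots> = ennreal ((\<Sum>i<m. \<beta> i) * e + T * (4 * C\<^sup>2))"
  proof -
    have "(\<Sum>i<m. ennreal (\<beta> i) * ennreal e) = (\<Sum>i<m. ennreal (\<beta> i * e))"
      using W(7) e by (intro sum.cong refl) (simp add: ennreal_mult)
    also have "\<dots> = ennreal (\<Sum>i<m. \<beta> i * e)" using W(7) e by (intro sum_ennreal) auto
    finally have h1: "(\<Sum>i<m. ennreal (\<beta> i) * ennreal e) = ennreal (\<Sum>i<m. \<beta> i * e)" .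
    have n1: "0 \<le> (\<Sum>i<m. \<beta> i * e)" using W(7) e by (intro sum_nonneg) auto
    have n2: "0 \<le> T * (4 * C\<^sup>2)" using W(4) by simp
    have h2: "ennreal T * ennreal (4 * C\<^sup>2) = ennreal (T * (4 * C\<^sup>2))" using W(4) by (simp add: ennreal_mult)
    show ?thesis unfolding h1 h2 ennreal_plus[OF n1 n2] sum_distrib_right ..
  qed
  also have "\<dots> \<le> ennreal (e + 4 * C\<^sup>2 * \<alpha>)"
  proof (rule ennreal_leI)
    have "(\<Sum>i<m. \<beta> i) \<le> 1" using W(3,4) by simp
    then have "(\<Sum>i<m. \<beta> i) * e \<le> 1 * e" using e by (intro mult_right_mono) auto
    moreover have "T * (4 * C\<^sup>2) \<le> \<alpha> * (4 * C\<^sup>2)" using W(2) tv by (intro mult_right_mono) auto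
    ultimately show "(\<Sum>i<m. \<beta> i) * e + T * (4 * C\<^sup>2) \<le> e + 4 * C\<^sup>2 * \<alpha>" by (simp add: mult.commute)
  qed
  finally show ?thesis .
qed



theorem lemmaB5:
  fixes C \<alpha> \<epsilon> :: real and m :: nat
    and Q Qh :: "nat \<Rightarrow> 'a::euclidean_space measure"
    and \<pi> \<pi>h :: "nat \<Rightarrow> real"
    and QM QhM :: "'a measure"
  assumes "C > 0"
    and "\<And>i. i < m \<Longrightarrow> bounded_prob C (Q i)"
    and "\<And>i. i < m \<Longrightarrow> bounded_prob C (Qh i)"
    and "prob_vector m \<pi>" and "prob_vector m \<pi>h"
    and "is_mixture m \<pi> Q QM" and "is_mixture m \<pi>h Qh QhM"
    and "TV m \<pi>h \<pi> \<le> \<alpha>"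
    and "\<And>i. i < m \<Longrightarrow> W2 (Qh i) (Q i) \<le> \<epsilon>"
  shows "W2 QhM QM \<le> \<epsilon> + 2 * C * sqrt \<alpha>"
proof -
  note bQ = assms(2) and bQh = assms(3) and pv = assms(4) and pvh = assms(5)
    and mix = assms(6) and mixh = assms(7) and tv = assms(8) and w2 = assms(9)
  have m: "0 < m" using weights(8)[OF pvh pv] .
  have "0 \<le> TV m \<pi>h \<pi>" unfolding TV_def by (simp add: sum_nonneg)
  then have a0: "0 \<le> \<alpha>" using tv by linarith
  have "0 \<le> W2 (Qh 0) (Q 0)" unfolding W2_def by simp
  then have e0: "0 \<le> \<epsilon>" using w2[OF m] by linarith
  have fin: "W2sq (Qh i) (Q i) \<le> ennreal (4 * C\<^sup>2)" if i: "i < m" for i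
  proof -
    have c: "coupling (Qh i) (Q i) (Qh i \<Otimes>\<^sub>M Q i)"
      "(\<integral>\<^sup>+ z. ennreal ((dist (fst z) (snd z))\<^sup>2) \<partial>(Qh i \<Otimes>\<^sub>M Q i)) \<le> ennreal (4 * C\<^sup>2)"
      using prod_coupling[OF bQh[OF i] bQ[OF i]] by auto
    have "W2sq (Qh i) (Q i) \<le> (\<integral>\<^sup>+ z. ennreal ((dist (fst z) (snd z))\<^sup>2) \<partial>(Qh i \<Otimes>\<^sub>M Q i))"
      unfolding W2sq_def by (rule INF_lower) (simp add: c(1))
    then show ?thesis using c(2) by (rule order_trans)
  qed
  have le: "W2sq (Qh i) (Q i) \<le> ennreal (\<epsilon>\<^sup>2)" if i: "i < m" for i
  proof -
    define x where "x = W2sq (Qh i) (Q i)"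
    have "x < top" using fin[OF i] unfolding x_def by (rule le_less_trans) simp
    then have xf: "x = ennreal (enn2real x)" by simp
    have "sqrt (enn2real x) \<le> \<epsilon>" using w2[OF i] unfolding W2_def x_def .
    then have "(sqrt (enn2real x))\<^sup>2 \<le> \<epsilon>\<^sup>2" by (intro power_mono) auto
    then have "enn2real x \<le> \<epsilon>\<^sup>2" by simp
    then show ?thesis unfolding x_def[symmetric] by (subst xf) (rule ennreal_leI)
  qed
  have main: "enn2real (W2sq QhM QM) \<le> \<epsilon>\<^sup>2 + 4 * C\<^sup>2 * \<alpha> + \<delta>" if d: "0 < \<delta>" for \<delta>
  proof -
    have "\<forall>i\<in>{..<m}. \<exists>g. coupling (Qh i) (Q i) g \<and>
        (\<integral>\<^sup>+ z. ennreal ((dist (fst z) (snd z))\<^sup>2) \<partial>g) < ennreal (\<epsilon>\<^sup>2 + \<delta>)"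
    proof
      fix i assume "i \<in> {..<m}"
      then have i: "i < m" by simp
      have "W2sq (Qh i) (Q i) < ennreal (\<epsilon>\<^sup>2 + \<delta>)"
      proof (rule le_less_trans[OF le[OF i]])
        show "ennreal (\<epsilon>\<^sup>2) < ennreal (\<epsilon>\<^sup>2 + \<delta>)" using d by (intro ennreal_lessI) (auto intro: add_nonneg_pos)
      qed
      then show "\<exists>g. coupling (Qh i) (Q i) g \<and>
        (\<integral>\<^sup>+ z. ennreal ((dist (fst z) (snd z))\<^sup>2) \<partial>g) < ennreal (\<epsilon>\<^sup>2 + \<delta>)"
        unfolding W2sq_def INF_less_iff by auto
    qed
    then obtain \<gamma> where g: "\<forall>i\<in>{..<m}. coupling (Qh i) (Q i) (\<gamma> i) \<and>
        (\<integral>\<^sup>+ z. ennreal ((dist (fst z) (snd z))\<^sup>2) \<partial>\<gamma> i) < ennreal (\<epsilon>\<^sup>2 + \<delta>)"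
      by (metis bchoice)
    have "W2sq QhM QM \<le> ennreal ((\<epsilon>\<^sup>2 + \<delta>) + 4 * C\<^sup>2 * \<alpha>)"
    proof (rule step[OF bQ bQh pv pvh mix mixh tv])
      show "\<And>i. i < m \<Longrightarrow> coupling (Qh i) (Q i) (\<gamma> i)" using g by auto
      show "\<And>i. i < m \<Longrightarrow> (\<integral>\<^sup>+ z. ennreal ((dist (fst z) (snd z))\<^sup>2) \<partial>\<gamma> i) \<le> ennreal (\<epsilon>\<^sup>2 + \<delta>)"
        using g by (auto intro: less_imp_le)
      show "0 \<le> \<epsilon>\<^sup>2 + \<delta>" using d by simp
    qed (assumption+)
    then have "enn2real (W2sq QhM QM) \<le> enn2real (ennreal ((\<epsilon>\<^sup>2 + \<delta>) + 4 * C\<^sup>2 * \<alpha>))"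
      by (rule enn2real_mono) simp
    also have "\<dots> = (\<epsilon>\<^sup>2 + \<delta>) + 4 * C\<^sup>2 * \<alpha>"
      using d a0 by (intro enn2real_ennreal add_nonneg_nonneg mult_nonneg_nonneg) auto
    finally show ?thesis by simp
  qed
  have "enn2real (W2sq QhM QM) \<le> \<epsilon>\<^sup>2 + 4 * C\<^sup>2 * \<alpha>"
    by (rule field_le_epsilon) (rule main)
  then have "W2 QhM QM \<le> sqrt (\<epsilon>\<^sup>2 + 4 * C\<^sup>2 * \<alpha>)" unfolding W2_def by (rule real_sqrt_le_mono)
  also have "\<dots> \<le> sqrt ((\<epsilon> + 2 * C * sqrt \<alpha>)\<^sup>2)"
  proof (rule real_sqrt_le_mono)
    have "(\<epsilon> + 2 * C * sqrt \<alpha>)\<^sup>2 = \<epsilon>\<^sup>2 + 4 * C\<^sup>2 * (sqrt \<alpha>)\<^sup>2 + 4 * C * \<epsilon> * sqrt \<alpha>"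
      by (simp add: power2_eq_square algebra_simps)
    also have "(sqrt \<alpha>)\<^sup>2 = \<alpha>" using a0 by simp
    finally show "\<epsilon>\<^sup>2 + 4 * C\<^sup>2 * \<alpha> \<le> (\<epsilon> + 2 * C * sqrt \<alpha>)\<^sup>2"
      using assms(1) e0 a0 by simp
  qed
  also have "\<dots> = \<epsilon> + 2 * C * sqrt \<alpha>" using assms(1) e0 a0 by simp
  finally show ?thesis .
qed


end
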